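(* Let $P$ be a program and $\sigma\in C_{\mathrm{Power}}(P)$ a Power computation. Then a load $(t,i)$ reads its value from a store $(t',i')$ via a load-from-memory transition if and only if (1) $\sigma=\sigma_1\cdot(\mathrm{prop},t,t',i',a)\cdot\sigma_2\cdot(\mathrm{load},t,i,a)\cdot\sigma_3$, (2) $\sigma_2$ contains no event of the form $(\mathrm{prop},t,*,*,a)$, and (3) $\sigma_3$ contains no event of the form $(\mathrm{commit},t,j,*,a)$ with $j\in\{1,\dots,i-1\}$.
   Context: Programs. Fix a finite set $D$ of values, which also serve as addresses, with $0\in D$, and a finite set $\mathit{Reg}$ of registers taking values in $D$. Expressions are built from constants in $D$, registers, and functions over $D\cup\{\bot\}$ that return $\bot$ iff some argument is $\bot$. Commands are loads $r\leftarrow \mathrm{mem}[e]$, stores $\mathrm{mem}[e]\leftarrow e'$, assignments $r\leftarrow e$, and $\mathrm{assume}(e)$. A thread is a finite automaton whose transitions (instructions) are labeled by commands; a program is a finite sequence of threads with ids $1,\dots,|P|$. $(t,i)$ denotes the $i$-th fetched instruction of thread $t$; $*$ denotes an arbitrary component. Power semantics. A state consists of, for each thread $t$, a runtime state $(F,C,L)$ ($F$ the sequence of fetched instructions, $C$ the set of committed indices, $L$ mapping each index to $\bot$ or to the store read by the load there: an initial store $\mathrm{init}_a$ of value $0$ to $a$, or a pair $(t',i')$), and a storage state $(co,prop)$ ($co$ assigns rational coherence keys to committed stores, initial stores have key $0$; $prop(t,a)$ is the last store to $a$ propagated to $t$, initially $\mathrm{init}_a$). Register values for instruction $(t,i)$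 come from the latest earlier fetched assignment or load to the register ($0$ if none; a load gives $\bot$ if unsatisfied, $0$ if it read an initial store, else the value of the store read). Address/data dependencies are earlier instructions an address/value depends on via registers; control dependencies are earlier assumes. Transitions: (fetch) append an instruction of $T_t$ continuing from the last fetched one's target state, event $(\mathrm{fetch},t,\text{instr})$; (load from memory) load $i$ with $L[i]=\bot$ and address $a\ne\bot$: $L[i]:=prop(t,a)$, event $(\mathrm{load},t,i,a)$; (early read) same event, if the greatest $i'<i$ that is a store with address in $\{a,\bot\}$ has address $a$, value $\ne\bot$ and is uncommitted: $L[i]:=(t,i')$; (commit) uncommitted $i$ with committed address/data/control dependencies, address and value $\ne\bot$, all earlier instructions with the same or unknown address committed, $L[i]\ne\bot$ for loads, value $\ne0$ for assumes: event $(\mathrm{commit},t,i)$; for a store additionally a fresh key $k$ is set as $co(t,i)$, event $(\mathrm{commit},t,i,k,a)$, immediately followed by propagation to $t$; (propagate) committed store $(t',i')$ to $a$ with $co(prop(t,a))<co(t',i')$: $prop(t,a):=(t',i')$, event $(\mathrm{prop},t,t',i',a)$. Final states: all fetched instructions committed; for loads $i'<i$ of a thread to the same address, $co(L[i'])\le co(L[i])$; for a store $i'$ and later load $i$ of a thread to the same address, $co(t,i')\le co(L[i])$. $C_{\mathrm{Power}}(P)$ is the set of event sequences leading from the initial state (nothing fetched) to a final state. *)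

theory Defs
  imports Main "HOL-Library.Extended_Nat"
begin

text \<open>A function symbol carries a function on D; it is lifted to D + bottom strictly
  (result is bottom iff some argument is bottom), which is exactly the class of
  functions allowed in the paper.  Bottom is None.\<close>

datatype ('r, 'd) exp =
    Const 'd
  | Reg 'r
  | Fn "'d list \<Rightarrow> 'd" "('r, 'd) exp list"

fun eval :: "('r \<Rightarrow> 'd option) \<Rightarrow> ('r, 'd) exp \<Rightarrow> 'd option" where
  "eval \<rho> (Const d) = Some d"
| "eval \<rho> (Reg r) = \<rho> r"
| "eval \<rho> (Fn f es) =
     (if (\<forall>e\<in>set es. eval \<rho> e \<noteq> None)
      then Some (f (map (\<lambda>e. the (eval \<rho> e)) es)) else None)"

fun regs_of :: "('r, 'd) exp \<Rightarrow> 'r set" where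
  "regs_of (Const d) = {}"
| "regs_of (Reg r) = {r}"
| "regs_of (Fn f es) = \<Union> (set (map regs_of es))"

datatype ('r, 'd) cmd =
    Load 'r "('r, 'd) exp"
  | Store "('r, 'd) exp" "('r, 'd) exp" \<comment> \<open>mem[e] <- e'\<close>
  | Assign 'r "('r, 'd) exp"
  | Assume "('r, 'd) exp"

text \<open>An instruction is a transition (source state, command, target state) of a thread automaton.\<close>
type_synonym ('q, 'r, 'd) instr = "'q \<times> ('r, 'd) cmd \<times> 'q"

record ('q, 'r, 'd) thread =
  tinit :: 'q
  ttrans :: "('q, 'r, 'd) instr set"

type_synonym ('q, 'r, 'd) program = "('q, 'r, 'd) thread list"

definition wf_prog :: "('q, 'r, 'd) program \<Rightarrow> bool" where
  "wf_prog P \<longleftrightarrow> (\<forall>T\<in>set P. finite (ttrans T))"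

definition cmd_of :: "('q, 'r, 'd) instr \<Rightarrow> ('r, 'd) cmd" where
  "cmd_of ins = fst (snd ins)"

definition src_of :: "('q, 'r, 'd) instr \<Rightarrow> 'q" where
  "src_of ins = fst ins"

definition tgt_of :: "('q, 'r, 'd) instr \<Rightarrow> 'q" where
  "tgt_of ins = snd (snd ins)"

definition is_load :: "('r, 'd) cmd \<Rightarrow> bool" where
  "is_load c = (case c of Load _ _ \<Rightarrow> True | _ \<Rightarrow> False)"

definition is_store :: "('r, 'd) cmd \<Rightarrow> bool" where
  "is_store c = (case c of Store _ _ \<Rightarrow> True | _ \<Rightarrow> False)"

definition is_assume :: "('r, 'd) cmd \<Rightarrow> bool" where
  "is_assume c = (case c of Assume _ \<Rightarrow> True | _ \<Rightarrow> False)"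

definition is_mem :: "('r, 'd) cmd \<Rightarrow> bool" where
  "is_mem c \<longleftrightarrow> is_load c \<or> is_store c"

definition writes :: "('r, 'd) cmd \<Rightarrow> 'r \<Rightarrow> bool" where
  "writes c r = (case c of Load r' _ \<Rightarrow> r' = r | Assign r' _ \<Rightarrow> r' = r | _ \<Rightarrow> False)"

text \<open>Store identifiers: the initial store init_a, or a store (t,i) (thread t, i-th fetched
  instruction, indices 1-based).\<close>
datatype 'd sid = Init 'd | St nat nat

record ('q, 'r, 'd) pstate =
  Fs  :: "nat \<Rightarrow> ('q, 'r, 'd) instr list"
  Cs  :: "nat \<Rightarrow> nat set"
  Ls  :: "nat \<Rightarrow> nat \<Rightarrow> 'd sid option"     \<comment> \<open>L of thread t; None = bottom\<close>
  co  :: "nat \<times> nat \<Rightarrow> rat option"          \<comment> \<open>coherence keys of committed stores\<close>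
  prp :: "nat \<Rightarrow> 'd \<Rightarrow> 'd sid"

definition init_state :: "('q, 'r, 'd) pstate" where
  "init_state = \<lparr> Fs = (\<lambda>t. []), Cs = (\<lambda>t. {}), Ls = (\<lambda>t i. None),
                  co = (\<lambda>x. None), prp = (\<lambda>t a. Init a) \<rparr>"

definition fetched :: "('q, 'r, 'd) pstate \<Rightarrow> nat \<Rightarrow> nat \<Rightarrow> bool" where
  "fetched s t i \<longleftrightarrow> 1 \<le> i \<and> i \<le> length (Fs s t)"

definition cmd_at :: "('q, 'r, 'd) pstate \<Rightarrow> nat \<Rightarrow> nat \<Rightarrow> ('r, 'd) cmd" where
  "cmd_at s t i = cmd_of (Fs s t ! (i - 1))"

text \<open>Register file in front of instruction i (1-based) of a fetched sequence F, given the
  values returned by the loads (lv j for the load at index j): each register holds the value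
  of the latest earlier assignment or load to it, and 0 if there is none.\<close>
definition reg_step :: "(nat \<Rightarrow> 'd option) \<Rightarrow> ('r \<Rightarrow> 'd option)
     \<Rightarrow> nat \<times> ('q, 'r, 'd) instr \<Rightarrow> ('r \<Rightarrow> 'd option)" where
  "reg_step lv \<rho> ji = (case cmd_of (snd ji) of
       Assign r e \<Rightarrow> \<rho>(r := eval \<rho> e)
     | Load r e \<Rightarrow> \<rho>(r := lv (fst ji))
     | _ \<Rightarrow> \<rho>)"

definition regs_at :: "('q, 'r, 'd::zero) instr list \<Rightarrow> (nat \<Rightarrow> 'd option) \<Rightarrow> nat \<Rightarrow> ('r \<Rightarrow> 'd option)" where
  "regs_at F lv i = foldl (reg_step lv) (\<lambda>r. Some 0) (zip [1..<i] F)"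

definition store_val_with :: "('q, 'r, 'd::zero) pstate \<Rightarrow> (nat \<Rightarrow> nat \<Rightarrow> 'd option)
     \<Rightarrow> nat \<Rightarrow> nat \<Rightarrow> 'd option" where
  "store_val_with s lv t i =
     (if fetched s t i then
        (case cmd_at s t i of Store ea ev \<Rightarrow> eval (regs_at (Fs s t) (lv t) i) ev | _ \<Rightarrow> None)
      else None)"

text \<open>Since store values may depend on load values (also in other threads),
  this is computed as a least fixed point by iteration from bottom.\<close>
primrec lvals :: "('q, 'r, 'd::zero) pstate \<Rightarrow> nat \<Rightarrow> nat \<Rightarrow> nat \<Rightarrow> 'd option" where
  "lvals s 0 = (\<lambda>t j. None)"
| "lvals s (Suc n) = (\<lambda>t j. case Ls s t j of
       None \<Rightarrow> None
     | Some (Init a) \<Rightarrow> Some 0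
     | Some (St t' i') \<Rightarrow> store_val_with s (lvals s n) t' i')"

definition load_val :: "('q, 'r, 'd::zero) pstate \<Rightarrow> nat \<Rightarrow> nat \<Rightarrow> 'd option" where
  "load_val s t j =
     (if \<exists>n. lvals s n t j \<noteq> None then lvals s (LEAST n. lvals s n t j \<noteq> None) t j else None)"

definition regval :: "('q, 'r, 'd::zero) pstate \<Rightarrow> nat \<Rightarrow> nat \<Rightarrow> 'r \<Rightarrow> 'd option" where
  "regval s t i = regs_at (Fs s t) (load_val s t) i"

definition addr :: "('q, 'r, 'd::zero) pstate \<Rightarrow> nat \<Rightarrow> nat \<Rightarrow> 'd option" where
  "addr s t i = (case cmd_at s t i of
       Load r e \<Rightarrow> eval (regval s t i) e
     | Store e e' \<Rightarrow> eval (regval s t i) e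
     | _ \<Rightarrow> None)"

definition ival :: "('q, 'r, 'd::zero) pstate \<Rightarrow> nat \<Rightarrow> nat \<Rightarrow> 'd option" where
  "ival s t i = (case cmd_at s t i of
       Load r e \<Rightarrow> load_val s t i
     | Store e e' \<Rightarrow> eval (regval s t i) e'
     | Assign r e \<Rightarrow> eval (regval s t i) e
     | Assume e \<Rightarrow> eval (regval s t i) e)"

definition writer :: "('q, 'r, 'd) instr list \<Rightarrow> nat \<Rightarrow> 'r \<Rightarrow> nat option" where
  "writer F i r =
     (if \<exists>j. 1 \<le> j \<and> j < i \<and> j \<le> length F \<and> writes (cmd_of (F ! (j - 1))) r
      then Some (GREATEST j. 1 \<le> j \<and> j < i \<and> j \<le> length F \<and> writes (cmd_of (F ! (j - 1))) r)
      else None)"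

inductive depends :: "('q, 'r, 'd) instr list \<Rightarrow> nat \<Rightarrow> ('r, 'd) exp \<Rightarrow> nat \<Rightarrow> bool"
  for F where
  dep_direct: "r \<in> regs_of e \<Longrightarrow> writer F i r = Some j \<Longrightarrow> depends F i e j"
| dep_trans: "r \<in> regs_of e \<Longrightarrow> writer F i r = Some j \<Longrightarrow> cmd_of (F ! (j - 1)) = Assign r' e'
     \<Longrightarrow> depends F j e' k \<Longrightarrow> depends F i e k"

definition addr_deps :: "('q, 'r, 'd) pstate \<Rightarrow> nat \<Rightarrow> nat \<Rightarrow> nat set" where
  "addr_deps s t i = (case cmd_at s t i of
       Load r e \<Rightarrow> {j. depends (Fs s t) i e j}
     | Store e e' \<Rightarrow> {j. depends (Fs s t) i e j}
     | _ \<Rightarrow> {})"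

definition data_deps :: "('q, 'r, 'd) pstate \<Rightarrow> nat \<Rightarrow> nat \<Rightarrow> nat set" where
  "data_deps s t i = (case cmd_at s t i of
       Load r e \<Rightarrow> {}
     | Store e e' \<Rightarrow> {j. depends (Fs s t) i e' j}
     | Assign r e \<Rightarrow> {j. depends (Fs s t) i e j}
     | Assume e \<Rightarrow> {j. depends (Fs s t) i e j})"

definition ctrl_deps :: "('q, 'r, 'd) pstate \<Rightarrow> nat \<Rightarrow> nat \<Rightarrow> nat set" where
  "ctrl_deps s t i = {j. 1 \<le> j \<and> j < i \<and> is_assume (cmd_at s t j)}"

datatype ('q, 'r, 'd) event =
    EFetch nat "('q, 'r, 'd) instr"
  | ELoad nat nat 'd
  | ECommit nat nat
  | ECommitSt nat nat rat 'd
  | EProp nat nat nat 'd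

definition key :: "('q, 'r, 'd) pstate \<Rightarrow> 'd sid \<Rightarrow> rat" where
  "key s x = (case x of Init a \<Rightarrow> 0 | St t i \<Rightarrow> the (co s (t, i)))"

definition thread_id :: "('q, 'r, 'd) program \<Rightarrow> nat \<Rightarrow> bool" where
  "thread_id P t \<longleftrightarrow> 1 \<le> t \<and> t \<le> length P"

definition setL :: "('q, 'r, 'd) pstate \<Rightarrow> nat \<Rightarrow> nat \<Rightarrow> 'd sid \<Rightarrow> ('q, 'r, 'd) pstate" where
  "setL s t i x = s\<lparr> Ls := (Ls s)(t := (Ls s t)(i := Some x)) \<rparr>"

definition lfm_step :: "('q, 'r, 'd::zero) program \<Rightarrow> ('q, 'r, 'd) pstate \<Rightarrow> nat \<Rightarrow> nat \<Rightarrow> 'd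
     \<Rightarrow> ('q, 'r, 'd) pstate \<Rightarrow> bool" where
  "lfm_step P s t i a s' \<longleftrightarrow>
     thread_id P t \<and> fetched s t i \<and> is_load (cmd_at s t i) \<and> Ls s t i = None
     \<and> addr s t i = Some a \<and> s' = setL s t i (prp s t a)"

definition early_step :: "('q, 'r, 'd::zero) program \<Rightarrow> ('q, 'r, 'd) pstate \<Rightarrow> nat \<Rightarrow> nat \<Rightarrow> 'd
     \<Rightarrow> ('q, 'r, 'd) pstate \<Rightarrow> bool" where
  "early_step P s t i a s' \<longleftrightarrow>
     thread_id P t \<and> fetched s t i \<and> is_load (cmd_at s t i) \<and> Ls s t i = None
     \<and> addr s t i = Some a
     \<and> (\<exists>i'. i' < i \<and> fetched s t i' \<and> is_store (cmd_at s t i') \<and> addr s t i' \<in> {Some a, None})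
     \<and> (let i' = GREATEST i'. i' < i \<and> fetched s t i' \<and> is_store (cmd_at s t i')
                              \<and> addr s t i' \<in> {Some a, None}
        in addr s t i' = Some a \<and> ival s t i' \<noteq> None \<and> i' \<notin> Cs s t \<and> s' = setL s t i (St t i'))"

definition can_commit :: "('q, 'r, 'd::zero) program \<Rightarrow> ('q, 'r, 'd) pstate \<Rightarrow> nat \<Rightarrow> nat \<Rightarrow> bool" where
  "can_commit P s t i \<longleftrightarrow>
     thread_id P t \<and> fetched s t i \<and> i \<notin> Cs s t
     \<and> addr_deps s t i \<union> data_deps s t i \<union> ctrl_deps s t i \<subseteq> Cs s t
     \<and> (is_mem (cmd_at s t i) \<longrightarrow> addr s t i \<noteq> None)
     \<and> ival s t i \<noteq> None
     \<and> (is_mem (cmd_at s t i) \<longrightarrow>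
          (\<forall>j. j < i \<and> fetched s t j \<and> is_mem (cmd_at s t j)
               \<and> (addr s t j = None \<or> addr s t j = addr s t i) \<longrightarrow> j \<in> Cs s t))
     \<and> (is_load (cmd_at s t i) \<longrightarrow> Ls s t i \<noteq> None)
     \<and> (is_assume (cmd_at s t i) \<longrightarrow> ival s t i \<noteq> Some 0)"

text \<open>One transition, labelled with the list of events it produces (the commit of a store
  produces the commit event immediately followed by the propagation event to its own thread).\<close>
inductive pstep :: "('q, 'r, 'd::zero) program \<Rightarrow> ('q, 'r, 'd) pstate \<Rightarrow> ('q, 'r, 'd) event list
     \<Rightarrow> ('q, 'r, 'd) pstate \<Rightarrow> bool" for P where
  fetch: "thread_id P t \<Longrightarrow> ins \<in> ttrans (P ! (t - 1))
     \<Longrightarrow> src_of ins = (if Fs s t = [] then tinit (P ! (t - 1)) else tgt_of (last (Fs s t)))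
     \<Longrightarrow> pstep P s [EFetch t ins] (s\<lparr> Fs := (Fs s)(t := Fs s t @ [ins]) \<rparr>)"
| load_mem: "lfm_step P s t i a s' \<Longrightarrow> pstep P s [ELoad t i a] s'"
| early_read: "early_step P s t i a s' \<Longrightarrow> pstep P s [ELoad t i a] s'"
| commit: "can_commit P s t i \<Longrightarrow> \<not> is_store (cmd_at s t i)
     \<Longrightarrow> pstep P s [ECommit t i] (s\<lparr> Cs := (Cs s)(t := insert i (Cs s t)) \<rparr>)"
| commit_store: "can_commit P s t i \<Longrightarrow> is_store (cmd_at s t i) \<Longrightarrow> addr s t i = Some a
     \<Longrightarrow> k \<noteq> 0 \<Longrightarrow> k \<notin> ran (co s)
     \<Longrightarrow> key s (prp s t a) < k
     \<Longrightarrow> pstep P s [ECommitSt t i k a, EProp t t i a]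
           (s\<lparr> Cs := (Cs s)(t := insert i (Cs s t)), co := (co s)((t, i) := Some k),
               prp := (prp s)(t := (prp s t)(a := St t i)) \<rparr>)"
| propagate: "thread_id P t \<Longrightarrow> co s (t', i') = Some k' \<Longrightarrow> is_store (cmd_at s t' i')
     \<Longrightarrow> addr s t' i' = Some a \<Longrightarrow> key s (prp s t a) < k'
     \<Longrightarrow> pstep P s [EProp t t' i' a] (s\<lparr> prp := (prp s)(t := (prp s t)(a := St t' i')) \<rparr>)"

definition final :: "('q, 'r, 'd::zero) pstate \<Rightarrow> bool" where
  "final s \<longleftrightarrow>
     (\<forall>t i. fetched s t i \<longrightarrow> i \<in> Cs s t)
   \<and> (\<forall>t i' i. i' < i \<and> fetched s t i' \<and> fetched s t i \<and> is_load (cmd_at s t i')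
        \<and> is_load (cmd_at s t i) \<and> addr s t i' = addr s t i
        \<longrightarrow> key s (the (Ls s t i')) \<le> key s (the (Ls s t i)))
   \<and> (\<forall>t i' i. i' < i \<and> fetched s t i' \<and> fetched s t i \<and> is_store (cmd_at s t i')
        \<and> is_load (cmd_at s t i) \<and> addr s t i' = addr s t i
        \<longrightarrow> key s (St t i') \<le> key s (the (Ls s t i)))"

text \<open>A Power run: states ss!0 .. ss!n with event blocks ess!k between ss!k and ss!(k+1),
  from the initial state to a final state.\<close>
definition power_run :: "('q, 'r, 'd::zero) program \<Rightarrow> ('q, 'r, 'd) pstate list
     \<Rightarrow> ('q, 'r, 'd) event list list \<Rightarrow> bool" where
  "power_run P ss ess \<longleftrightarrow>
     length ss = Suc (length ess) \<and> ss ! 0 = init_state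
     \<and> (\<forall>k < length ess. pstep P (ss ! k) (ess ! k) (ss ! Suc k))
     \<and> final (last ss)"

definition C_Power :: "('q, 'r, 'd::zero) program \<Rightarrow> ('q, 'r, 'd) event list set" where
  "C_Power P = {concat ess | ss ess. power_run P ss ess}"

end

theory Submission
  imports Defs
begin


definition agree :: "('a \<Rightarrow> 'b option) \<Rightarrow> ('a \<Rightarrow> 'b option) \<Rightarrow> bool" where
  "agree f g \<longleftrightarrow> (\<forall>x v. f x = Some v \<longrightarrow> g x = Some v)"

lemma eval_mono: "agree \<rho> \<rho>' \<Longrightarrow> eval \<rho> e = Some v \<Longrightarrow> eval \<rho>' e = Some v"
proof (induction \<rho> e arbitrary: v rule: eval.induct)
  case (1 \<rho> d) then show ?case by simp
next
  case (2 \<rho> r) then show ?case by (simp add: agree_def)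
next
  case (3 \<rho> f es)
  have all: "\<forall>e\<in>set es. eval \<rho> e \<noteq> None" using "3.prems"(2) by (auto split: if_splits)
  have eq: "\<And>e. e \<in> set es \<Longrightarrow> eval \<rho>' e = eval \<rho> e"
  proof -
    fix e assume e: "e \<in> set es"
    then obtain w where w: "eval \<rho> e = Some w" using all by blast
    show "eval \<rho>' e = eval \<rho> e" using "3.IH"(1)[OF e "3.prems"(1) w] w by simp
  qed
  have m: "map (\<lambda>e. the (eval \<rho>' e)) es = map (\<lambda>e. the (eval \<rho> e)) es"
    using eq by simp
  have "\<forall>e\<in>set es. eval \<rho>' e \<noteq> None" using eq all by simp
  then have "eval \<rho>' (Fn f es) = Some (f (map (\<lambda>e. the (eval \<rho>' e)) es))" by simp
  also have "\<dots> = Some (f (map (\<lambda>e. the (eval \<rho> e)) es))" by (simp only: m)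
  also have "\<dots> = eval \<rho> (Fn f es)" using all by simp
  finally show ?case using "3.prems"(2) by simp
qed

lemma reg_step_mono: "agree lv lv' \<Longrightarrow> agree \<rho> \<rho>' \<Longrightarrow> agree (reg_step lv \<rho> ji) (reg_step lv' \<rho>' ji)"
proof -
  assume a: "agree lv lv'" "agree \<rho> \<rho>'"
  show ?thesis
  proof (cases "cmd_of (snd ji)")
    case (Load r e) then show ?thesis using a by (simp add: reg_step_def agree_def)
  next
    case (Store e e') then show ?thesis using a by (simp add: reg_step_def)
  next
    case (Assign r e) then show ?thesis using a eval_mono[OF a(2), of e] by (auto simp add: reg_step_def agree_def)
  next
    case (Assume e) then show ?thesis using a by (simp add: reg_step_def)
  qed
qed

lemma foldl_reg_mono: "agree lv lv' \<Longrightarrow> agree \<rho> \<rho>' \<Longrightarrow> agree (foldl (reg_step lv) \<rho> xs) (foldl (reg_step lv') \<rho>' xs)"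
  by (induction xs arbitrary: \<rho> \<rho>') (auto intro: reg_step_mono)

lemma zip_append_short: "length xs \<le> length F \<Longrightarrow> zip xs (F @ zs) = zip xs F"
  by (induction xs arbitrary: F) (auto simp: zip_Cons1 split: list.splits)

lemma regs_at_mono: "i \<le> Suc (length F) \<Longrightarrow> agree lv lv' \<Longrightarrow> agree (regs_at F lv i) (regs_at (F @ zs) lv' i)"
proof -
  assume a: "i \<le> Suc (length F)" "agree lv lv'"
  have "agree (\<lambda>r::'b. Some (0::'c::zero)) (\<lambda>r. Some 0)" by (simp add: agree_def)
  moreover have "zip [1..<i] (F @ zs) = zip [1..<i] F" using a(1) by (simp add: zip_append_short)
  ultimately show ?thesis using foldl_reg_mono[OF a(2)] unfolding regs_at_def by metis
qed

definition ext :: "('q, 'r, 'd) pstate \<Rightarrow> ('q, 'r, 'd) pstate \<Rightarrow> bool" where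
  "ext s s' \<longleftrightarrow> (\<forall>t. \<exists>zs. Fs s' t = Fs s t @ zs) \<and> (\<forall>t j v. Ls s t j = Some v \<longrightarrow> Ls s' t j = Some v)"

lemma ext_refl: "ext s s" by (simp add: ext_def)
lemma ext_trans: "ext s1 s2 \<Longrightarrow> ext s2 s3 \<Longrightarrow> ext s1 s3"
  unfolding ext_def by (metis append.assoc)

lemma ext_fetched: "ext s s' \<Longrightarrow> fetched s t i \<Longrightarrow> fetched s' t i"
proof -
  assume "ext s s'" "fetched s t i"
  then obtain zs where "Fs s' t = Fs s t @ zs" unfolding ext_def by blast
  then show ?thesis using \<open>fetched s t i\<close> unfolding fetched_def by simp
qed

lemma ext_cmd_at: "ext s s' \<Longrightarrow> fetched s t i \<Longrightarrow> cmd_at s' t i = cmd_at s t i"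
proof -
  assume "ext s s'" "fetched s t i"
  then obtain zs where "Fs s' t = Fs s t @ zs" unfolding ext_def by blast
  then show ?thesis using \<open>fetched s t i\<close> unfolding fetched_def cmd_at_def by (auto simp add: nth_append)
qed


lemma store_val_mono:
  assumes "ext s s'" "\<And>t. agree (lv t) (lv' t)" "store_val_with s lv t i = Some v"
  shows "store_val_with s' lv' t i = Some v"
proof -
  have f: "fetched s t i" using assms(3) by (simp add: store_val_with_def split: if_splits)
  obtain zs where zs: "Fs s' t = Fs s t @ zs" using assms(1) ext_def by blast
  have ag: "agree (regs_at (Fs s t) (lv t) i) (regs_at (Fs s' t) (lv' t) i)"
    using f unfolding zs fetched_def by (intro regs_at_mono assms(2)) simp
  show ?thesis using assms(3) f ext_fetched[OF assms(1) f] ext_cmd_at[OF assms(1) f] ag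
    by (auto simp: store_val_with_def split: cmd.splits intro: eval_mono)
qed

lemma lvals_mono_state: "ext s s' \<Longrightarrow> lvals s n t j = Some v \<Longrightarrow> lvals s' n t j = Some v"
proof (induction n arbitrary: t j v)
  case 0 then show ?case by simp
next
  case (Suc n)
  have ag: "\<And>t. agree (lvals s n t) (lvals s' n t)" using Suc by (simp add: agree_def)
  from Suc.prems show ?case
    using store_val_mono[OF Suc.prems(1) ag]
    by (auto simp: ext_def split: option.splits sid.splits)
qed

lemma lvals_mono_suc: "lvals s n t j = Some v \<Longrightarrow> lvals s (Suc n) t j = Some v"
proof (induction n arbitrary: t j v)
  case 0 then show ?case by simp
next
  case (Suc n)
  have ag: "\<And>t. agree (lvals s n t) (lvals s (Suc n) t)" using Suc.IH by (simp add: agree_def)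
  from Suc.prems show ?case
    using store_val_mono[OF ext_refl ag]
    by (auto split: option.splits sid.splits)
qed

lemma lvals_mono_le: "n \<le> m \<Longrightarrow> lvals s n t j = Some v \<Longrightarrow> lvals s m t j = Some v"
  by (induction m rule: dec_induct) (auto simp del: lvals.simps intro: lvals_mono_suc)

lemma load_val_of_lvals: "lvals s n t j = Some v \<Longrightarrow> load_val s t j = Some v"
proof -
  assume h: "lvals s n t j = Some v"
  define m where "m = (LEAST n. lvals s n t j \<noteq> None)"
  have ex: "\<exists>n. lvals s n t j \<noteq> None" using h by auto
  have "lvals s m t j \<noteq> None" unfolding m_def by (rule LeastI_ex[OF ex])
  moreover have "m \<le> n" unfolding m_def using h by (simp add: Least_le)
  ultimately have "lvals s m t j = Some v" using h lvals_mono_le by fastforce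
  then show ?thesis using ex by (simp add: load_val_def m_def)
qed

lemma load_val_lvals: "load_val s t j = Some v \<Longrightarrow> \<exists>n. lvals s n t j = Some v"
  unfolding load_val_def by (auto split: if_splits)

lemma load_val_mono: "ext s s' \<Longrightarrow> agree (load_val s t) (load_val s' t)"
  unfolding agree_def by (meson load_val_lvals load_val_of_lvals lvals_mono_state)

lemma addr_mono: assumes "ext s s'" "fetched s t i" "addr s t i = Some a" shows "addr s' t i = Some a"
proof -
  obtain zs where zs: "Fs s' t = Fs s t @ zs" using assms(1) ext_def by blast
  have ag: "agree (regval s t i) (regval s' t i)"
    using assms(2) unfolding regval_def zs fetched_def by (intro regs_at_mono load_val_mono assms(1)) simp
  show ?thesis using assms(3) ext_cmd_at[OF assms(1,2)] ag
    by (auto simp: addr_def split: cmd.splits intro: eval_mono)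
qed




definition inv :: "('q, 'r, 'd) pstate \<Rightarrow> bool" where
  "inv s \<longleftrightarrow> (\<forall>x y. co s (x,y) \<noteq> None \<longrightarrow> y \<in> Cs s x) \<and> (\<forall>t a x y. prp s t a = St x y \<longrightarrow> co s (x,y) \<noteq> None)"

definition pupd :: "nat \<Rightarrow> 'd \<Rightarrow> 'd sid \<Rightarrow> ('q, 'r, 'd) event \<Rightarrow> 'd sid" where
  "pupd t a p e = (case e of EProp t0 x y a0 \<Rightarrow> if t0 = t \<and> a0 = a then St x y else p | _ \<Rightarrow> p)"

lemma inv_init: "inv init_state" by (simp add: inv_def init_state_def)

lemma step_ext: "pstep P s ev s' \<Longrightarrow> ext s s'"
  by (induction rule: pstep.induct)
     (auto simp: ext_def lfm_step_def early_step_def setL_def Let_def)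

lemma step_inv: "pstep P s ev s' \<Longrightarrow> inv s \<Longrightarrow> inv s'"
  by (induction rule: pstep.induct)
     (auto simp: inv_def lfm_step_def early_step_def setL_def Let_def)

lemma step_Cs: "pstep P s ev s' \<Longrightarrow> Cs s t \<subseteq> Cs s' t"
  by (induction rule: pstep.induct)
     (auto simp: lfm_step_def early_step_def setL_def Let_def)

lemma step_co: "pstep P s ev s' \<Longrightarrow> inv s \<Longrightarrow> co s x = Some v \<Longrightarrow> co s' x = Some v"
  by (induction rule: pstep.induct)
     (auto simp: inv_def can_commit_def lfm_step_def early_step_def setL_def Let_def)

lemma step_prp: "pstep P s ev s' \<Longrightarrow> prp s' t a = foldl (pupd t a) (prp s t a) ev"
  by (induction rule: pstep.induct)
     (auto simp: pupd_def lfm_step_def early_step_def setL_def Let_def)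

lemma key_co: "(\<forall>x v. co s x = Some v \<longrightarrow> co s' x = Some v) \<Longrightarrow> inv s \<Longrightarrow> prp s t a = p \<Longrightarrow> key s' p = key s p"
proof (cases p)
  case (St x y)
  assume h: "\<forall>x v. co s x = Some v \<longrightarrow> co s' x = Some v" "inv s" "prp s t a = p"
  then obtain v where "co s (x,y) = Some v" using St unfolding inv_def by blast
  then show ?thesis using St h by (simp add: key_def)
qed (simp add: key_def)

lemma step_key: "pstep P s ev s' \<Longrightarrow> inv s \<Longrightarrow> key s (prp s t a) \<le> key s' (prp s' t a)"
proof (induction rule: pstep.induct)
  case (commit_store s t0 i a0 k)
  have "i \<notin> Cs s t0" using commit_store.hyps(1) by (simp add: can_commit_def)
  then have none: "co s (t0, i) = None" using commit_store.prems unfolding inv_def by blast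
  show ?case
  proof (cases "t = t0 \<and> a = a0")
    case True then show ?thesis using commit_store.hyps(6) by (auto simp: key_def)
  next
    case False
    have "key (s\<lparr>Cs := (Cs s)(t0 := insert i (Cs s t0)), co := (co s)((t0, i) \<mapsto> k),
              prp := (prp s)(t0 := (prp s t0)(a0 := St t0 i))\<rparr>) (prp s t a) = key s (prp s t a)"
      by (rule key_co[OF _ commit_store.prems]) (use none in auto)
    then show ?thesis using False by auto
  qed
next
  case (propagate t0 s t' i' k' a0)
  then show ?case by (auto simp: key_def split: sid.splits)
qed (auto simp: lfm_step_def early_step_def setL_def Let_def key_def split: sid.splits)

lemma step_commitst: "pstep P s ev s' \<Longrightarrow> ECommitSt t j k a \<in> set ev \<Longrightarrow>
   fetched s t j \<and> is_store (cmd_at s t j) \<and> addr s t j = Some a \<and> key s (prp s t a) < k \<and> co s' (t,j) = Some k"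
  by (induction rule: pstep.induct) (auto simp: can_commit_def)

lemma step_load: "pstep P s ev s' \<Longrightarrow> ELoad t i a \<in> set ev \<Longrightarrow>
   ev = [ELoad t i a] \<and> (lfm_step P s t i a s' \<or> early_step P s t i a s')"
  by (induction rule: pstep.induct) auto

lemma step_Cs_new: "pstep P s ev s' \<Longrightarrow> i \<notin> Cs s t \<Longrightarrow> i \<in> Cs s' t \<Longrightarrow>
   (ev = [ECommit t i] \<and> \<not> is_store (cmd_at s t i)) \<or> (\<exists>k a. ev = [ECommitSt t i k a, EProp t t i a] \<and> addr s t i = Some a)"
  by (induction rule: pstep.induct)
     (auto simp: lfm_step_def early_step_def setL_def Let_def split: if_splits)

context
  fixes P ss ess
  assumes R: "power_run P ss ess"
begin

lemma run_step: "k < length ess \<Longrightarrow> pstep P (ss!k) (ess!k) (ss!Suc k)"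
  using R by (simp add: power_run_def)

lemma run_inv: "n \<le> length ess \<Longrightarrow> inv (ss!n)"
proof (induction n)
  case 0 then show ?case using R inv_init by (simp add: power_run_def)
next
  case (Suc n)
  then have "n < length ess" "inv (ss!n)" by auto
  then show ?case using step_inv[OF run_step] by blast
qed

lemma run_mono:
  assumes "\<And>k. k < length ess \<Longrightarrow> Q (ss!k) (ss!Suc k)" "\<And>s. Q s s" "\<And>a b c. Q a b \<Longrightarrow> Q b c \<Longrightarrow> Q a c"
  shows "m \<le> n \<Longrightarrow> n \<le> length ess \<Longrightarrow> Q (ss!m) (ss!n)"
proof (induction n rule: dec_induct)
  case base then show ?case using assms(2) by simp
next
  case (step n) then show ?case using assms(1,3) by (meson Suc_le_lessD less_or_eq_imp_le)
qed

lemma run_ext: "m \<le> n \<Longrightarrow> n \<le> length ess \<Longrightarrow> ext (ss!m) (ss!n)"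
  by (rule run_mono[where Q=ext]) (auto intro: step_ext run_step ext_refl ext_trans)

lemma run_Cs: "m \<le> n \<Longrightarrow> n \<le> length ess \<Longrightarrow> Cs (ss!m) t \<subseteq> Cs (ss!n) t"
  by (rule run_mono[where Q="\<lambda>s s'. Cs s t \<subseteq> Cs s' t"]) (auto dest: step_Cs[OF run_step])

lemma run_co: "m \<le> n \<Longrightarrow> n \<le> length ess \<Longrightarrow> co (ss!m) x = Some v \<Longrightarrow> co (ss!n) x = Some v"
proof (induction n rule: dec_induct)
  case base then show ?case by simp
next
  case (step n) then show ?case using step_co[OF run_step run_inv] by simp
qed

lemma run_key: "m \<le> n \<Longrightarrow> n \<le> length ess \<Longrightarrow> key (ss!m) (prp (ss!m) t a) \<le> key (ss!n) (prp (ss!n) t a)"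
proof (induction n rule: dec_induct)
  case base then show ?case by simp
next
  case (step n) then show ?case using step_key[OF run_step run_inv, of n t a] by simp
qed

lemma run_prp: "n \<le> length ess \<Longrightarrow> prp (ss!n) t a = foldl (pupd t a) (Init a) (concat (take n ess))"
proof (induction n)
  case 0 then show ?case using R by (simp add: power_run_def init_state_def)
next
  case (Suc n) then show ?case using step_prp[OF run_step, of n t a] by (simp add: take_Suc_conv_app_nth)
qed

lemma run_last: "last ss = ss ! length ess"
proof -
  have "length ss = Suc (length ess)" using R by (simp add: power_run_def)
  then show ?thesis by (metis diff_Suc_1 last_conv_nth list.size(3) nat.distinct(1))
qed

lemma run_final: "final (ss ! length ess)"
  using R run_last by (simp add: power_run_def)

end



lemma foldl_pupd_noprop: "(\<forall>e\<in>set zs. \<not> (\<exists>x y. e = EProp t x y a)) \<Longrightarrow> foldl (pupd t a) p zs = p"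
  by (induction zs arbitrary: p) (auto simp: pupd_def split: event.splits)

lemma foldl_pupd_St: "foldl (pupd t a) p \<sigma> = St x y \<Longrightarrow>
   p = St x y \<or> (\<exists>\<sigma>1 \<sigma>2. \<sigma> = \<sigma>1 @ [EProp t x y a] @ \<sigma>2 \<and> (\<forall>e\<in>set \<sigma>2. \<not> (\<exists>x y. e = EProp t x y a)))"
proof (induction \<sigma> rule: rev_induct)
  case Nil then show ?case by simp
next
  case (snoc e \<sigma>)
  show ?case
  proof (cases "\<exists>x y. e = EProp t x y a")
    case True
    then obtain x' y' where e: "e = EProp t x' y' a" by blast
    then have "x' = x \<and> y' = y" using snoc.prems by (simp add: pupd_def)
    then show ?thesis using e by (intro disjI2 exI[of _ \<sigma>] exI[of _ "[]"]) auto
  next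
    case False
    then have "pupd t a (foldl (pupd t a) p \<sigma>) e = foldl (pupd t a) p \<sigma>"
      by (auto simp: pupd_def split: event.splits)
    then have "foldl (pupd t a) p \<sigma> = St x y" using snoc.prems by simp
    from snoc.IH[OF this] show ?thesis
    proof
      assume "\<exists>\<sigma>1 \<sigma>2. \<sigma> = \<sigma>1 @ [EProp t x y a] @ \<sigma>2 \<and> (\<forall>e\<in>set \<sigma>2. \<not> (\<exists>x y. e = EProp t x y a))"
      then obtain \<sigma>1 \<sigma>2 where "\<sigma> = \<sigma>1 @ [EProp t x y a] @ \<sigma>2" "\<forall>e\<in>set \<sigma>2. \<not> (\<exists>x y. e = EProp t x y a)" by blast
      then show ?thesis using False by (intro disjI2 exI[of _ \<sigma>1] exI[of _ "\<sigma>2 @ [e]"]) auto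
    qed simp
  qed
qed

lemma concat_split: "concat ess = xs @ e # ys \<Longrightarrow>
  \<exists>k<length ess. \<exists>u v. ess!k = u @ e # v \<and> xs = concat (take k ess) @ u \<and> ys = v @ concat (drop (Suc k) ess)"
proof (induction ess arbitrary: xs)
  case Nil then show ?case by simp
next
  case (Cons b ess)
  have "b @ concat ess = xs @ e # ys" using Cons.prems by simp
  then obtain us where h: "(b = xs @ us \<and> us @ concat ess = e # ys) \<or> (b @ us = xs \<and> concat ess = us @ e # ys)"
    unfolding append_eq_append_conv2 by blast
  show ?case
  proof (cases "b @ us = xs \<and> concat ess = us @ e # ys")
    case True
    from Cons.IH[OF conjunct2[OF True]] obtain k u v where "k < length ess" "ess!k = u @ e # v"
      "us = concat (take k ess) @ u" "ys = v @ concat (drop (Suc k) ess)" by blast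
    then show ?thesis using True by (intro exI[of _ "Suc k"]) auto
  next
    case False
    then have h2: "b = xs @ us" "us @ concat ess = e # ys" using h by auto
    show ?thesis
    proof (cases us)
      case Nil
      then have "concat ess = [] @ e # ys" using h2 by simp
      from Cons.IH[OF this] obtain k u v where "k < length ess" "ess!k = u @ e # v"
        "[] = concat (take k ess) @ u" "ys = v @ concat (drop (Suc k) ess)" by blast
      then show ?thesis using h2 Nil by (intro exI[of _ "Suc k"]) auto
    next
      case (Cons e' us')
      then show ?thesis using h2 by (intro exI[of _ 0]) auto
    qed
  qed
qed

lemma concat_nth: "k < length ess \<Longrightarrow> concat ess = concat (take k ess) @ ess!k @ concat (drop (Suc k) ess)"
  by (metis concat.simps(2) concat_append id_take_nth_drop append.assoc)

lemma set_concat_drop: "e \<in> set (concat (drop (Suc k) ess)) \<Longrightarrow> \<exists>m. k < m \<and> m < length ess \<and> e \<in> set (ess!m)"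
proof -
  assume "e \<in> set (concat (drop (Suc k) ess))"
  then obtain b where "b \<in> set (drop (Suc k) ess)" "e \<in> set b" by auto
  then obtain j where "j < length (drop (Suc k) ess)" "drop (Suc k) ess ! j = b" by (auto simp: in_set_conv_nth)
  then show ?thesis using \<open>e \<in> set b\<close> by (intro exI[of _ "Suc k + j"]) auto
qed

lemma in_concat_drop: "k < m \<Longrightarrow> m < length ess \<Longrightarrow> e \<in> set (ess!m) \<Longrightarrow> e \<in> set (concat (drop (Suc k) ess))"
proof -
  assume a: "k < m" "m < length ess" "e \<in> set (ess!m)"
  have "ess!m = drop (Suc k) ess ! (m - Suc k)" using a by simp
  moreover have "m - Suc k < length (drop (Suc k) ess)" using a by simp
  ultimately have "ess!m \<in> set (drop (Suc k) ess)" by (metis nth_mem)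
  then show ?thesis using a(3) by auto
qed

lemma first_cross: "\<not> Q k \<Longrightarrow> Q n \<Longrightarrow> k \<le> n \<Longrightarrow> \<exists>m. k \<le> m \<and> m < n \<and> \<not> Q m \<and> Q (Suc m)"
proof (induction n)
  case 0 then show ?case by simp
next
  case (Suc n) then show ?case by (metis le_SucE less_Suc_eq)
qed

lemma step_Ls_new: "pstep P s ev s' \<Longrightarrow> Ls s t i = None \<Longrightarrow> Ls s' t i \<noteq> None \<Longrightarrow>
   \<exists>a. ev = [ELoad t i a] \<and> (lfm_step P s t i a s' \<or> early_step P s t i a s')"
  by (induction rule: pstep.induct) (auto simp: lfm_step_def early_step_def setL_def Let_def split: if_splits)



lemma dir1:
  assumes R: "power_run P ss ess"
    and k: "k < length ess" and lfm: "lfm_step P (ss ! k) t i a (ss ! Suc k)"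
    and Lsk: "Ls (ss ! Suc k) t i = Some (St t' i')"
  shows "\<exists>\<sigma>1 \<sigma>2 \<sigma>3 a.
           concat ess = \<sigma>1 @ [EProp t t' i' a] @ \<sigma>2 @ [ELoad t i a] @ \<sigma>3
         \<and> (\<forall>e\<in>set \<sigma>2. \<not> (\<exists>x y. e = EProp t x y a))
         \<and> (\<forall>e\<in>set \<sigma>3. \<not> (\<exists>j k. e = ECommitSt t j k a \<and> j \<in> {1..i - 1}))"
proof -
  let ?s = "ss ! k"
  let ?N = "length ess"
  let ?sf = "ss ! ?N"
  have L: "Ls ?s t i = None" "fetched ?s t i" "is_load (cmd_at ?s t i)" "addr ?s t i = Some a"
    "ss ! Suc k = setL ?s t i (prp ?s t a)" using lfm by (auto simp: lfm_step_def)
  have prpk: "prp ?s t a = St t' i'" using Lsk L(5) by (simp add: setL_def)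
  have step: "pstep P ?s (ess!k) (ss ! Suc k)" using run_step[OF R k] .
  obtain a' where ev: "ess!k = [ELoad t i a']" "lfm_step P ?s t i a' (ss!Suc k) \<or> early_step P ?s t i a' (ss!Suc k)"
    using step_Ls_new[OF step L(1)] Lsk by auto
  have "a' = a" using ev(2) L(4) by (auto simp: lfm_step_def early_step_def)
  with ev have evk: "ess!k = [ELoad t i a]" by simp
  have "foldl (pupd t a) (Init a) (concat (take k ess)) = St t' i'"
    using run_prp[OF R, of k t a] k prpk by simp
  from foldl_pupd_St[OF this] obtain \<sigma>1 \<sigma>2 where s12: "concat (take k ess) = \<sigma>1 @ [EProp t t' i' a] @ \<sigma>2"
    "\<forall>e\<in>set \<sigma>2. \<not> (\<exists>x y. e = EProp t x y a)" by auto
  have dec: "concat ess = \<sigma>1 @ [EProp t t' i' a] @ \<sigma>2 @ [ELoad t i a] @ concat (drop (Suc k) ess)"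
    using concat_nth[OF k] s12 evk by simp
  have c3: "\<forall>e\<in>set (concat (drop (Suc k) ess)). \<not> (\<exists>j kk. e = ECommitSt t j kk a \<and> j \<in> {1..i - 1})"
  proof (intro ballI notI)
    fix e assume e: "e \<in> set (concat (drop (Suc k) ess))" "\<exists>j kk. e = ECommitSt t j kk a \<and> j \<in> {1..i - 1}"
    then obtain j kk where ej: "e = ECommitSt t j kk a" "j \<in> {1..i - 1}" by blast
    obtain m where m: "k < m" "m < ?N" "e \<in> set (ess!m)" using set_concat_drop[OF e(1)] by blast
    have cs: "fetched (ss!m) t j" "is_store (cmd_at (ss!m) t j)" "addr (ss!m) t j = Some a"
      "key (ss!m) (prp (ss!m) t a) < kk" "co (ss!Suc m) (t,j) = Some kk"
      using step_commitst[OF run_step[OF R m(2)]] m(3) ej(1) by blast+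
    have invk: "inv ?s" using run_inv[OF R] k by simp
    then obtain c where c: "co ?s (t',i') = Some c" using prpk unfolding inv_def by blast
    have keyk: "key ?s (prp ?s t a) = c" using prpk c by (simp add: key_def)
    have "key ?s (prp ?s t a) \<le> key (ss!m) (prp (ss!m) t a)" using run_key[OF R, of k m t a] m by simp
    then have ckk: "c < kk" using cs(4) keyk by simp
    have cof: "co ?sf (t,j) = Some kk" using run_co[OF R, of "Suc m" ?N] cs(5) m by simp
    have cof2: "co ?sf (t',i') = Some c" using run_co[OF R, of k ?N] c k by simp
    have exm: "ext (ss!m) ?sf" using run_ext[OF R, of m ?N] m by simp
    have exk: "ext ?s ?sf" using run_ext[OF R, of k ?N] k by simp
    have exk1: "ext (ss!Suc k) ?sf" using run_ext[OF R, of "Suc k" ?N] k by simp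
    have Lsf: "Ls ?sf t i = Some (St t' i')" using exk1 Lsk by (simp add: ext_def)
    have f1: "fetched ?sf t j" "is_store (cmd_at ?sf t j)" "addr ?sf t j = Some a"
      using ext_fetched[OF exm cs(1)] ext_cmd_at[OF exm cs(1)] addr_mono[OF exm cs(1) cs(3)] cs(2) by auto
    have f2: "fetched ?sf t i" "is_load (cmd_at ?sf t i)" "addr ?sf t i = Some a"
      using ext_fetched[OF exk L(2)] ext_cmd_at[OF exk L(2)] addr_mono[OF exk L(2) L(4)] L(3) by auto
    have ji: "j < i" using ej(2) by auto
    have fin: "final ?sf" using run_final[OF R] .
    then have "key ?sf (St t j) \<le> key ?sf (the (Ls ?sf t i))"
      unfolding final_def using ji f1 f2 by auto
    then have "kk \<le> c" using cof cof2 Lsf by (simp add: key_def)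
    then show False using ckk by simp
  qed
  show ?thesis using dec s12(2) c3 by blast
qed

lemma dir2:
  assumes R: "power_run P ss ess"
    and dec: "concat ess = \<sigma>1 @ [EProp t t' i' a] @ \<sigma>2 @ [ELoad t i a] @ \<sigma>3"
    and c2: "\<forall>e\<in>set \<sigma>2. \<not> (\<exists>x y. e = EProp t x y a)"
    and c3: "\<forall>e\<in>set \<sigma>3. \<not> (\<exists>j k. e = ECommitSt t j k a \<and> j \<in> {1..i - 1})"
  shows "\<exists>k < length ess. \<exists>a. lfm_step P (ss ! k) t i a (ss ! Suc k)
                               \<and> Ls (ss ! Suc k) t i = Some (St t' i')"
proof -
  let ?N = "length ess"
  let ?sf = "ss ! ?N"
  have "concat ess = (\<sigma>1 @ [EProp t t' i' a] @ \<sigma>2) @ ELoad t i a # \<sigma>3" using dec by simp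
  from concat_split[OF this] obtain k u v where kk: "k < ?N" "ess!k = u @ ELoad t i a # v"
    "\<sigma>1 @ [EProp t t' i' a] @ \<sigma>2 = concat (take k ess) @ u" "\<sigma>3 = v @ concat (drop (Suc k) ess)" by blast
  let ?s = "ss ! k"
  have step: "pstep P ?s (ess!k) (ss ! Suc k)" using run_step[OF R kk(1)] .
  from step_load[OF step] kk(2) have evk: "ess!k = [ELoad t i a]"
    and lt: "lfm_step P ?s t i a (ss!Suc k) \<or> early_step P ?s t i a (ss!Suc k)" by auto
  have uv0: "u @ ELoad t i a # v = [ELoad t i a]" using evk kk(2) by simp
  then have uv: "u = []" "v = []" by (cases u; simp)+
  show ?thesis
  proof (cases "lfm_step P ?s t i a (ss!Suc k)")
    case True
    have "prp ?s t a = foldl (pupd t a) (Init a) (concat (take k ess))" using run_prp[OF R, of k t a] kk(1) by simp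
    also have "\<dots> = foldl (pupd t a) (St t' i') \<sigma>2"
    proof -
      have "concat (take k ess) = \<sigma>1 @ [EProp t t' i' a] @ \<sigma>2" using kk(3) uv by simp
      then show ?thesis by (simp add: pupd_def)
    qed
    also have "\<dots> = St t' i'" using foldl_pupd_noprop[OF c2] .
    finally have "Ls (ss ! Suc k) t i = Some (St t' i')" using True by (simp add: lfm_step_def setL_def)
    then show ?thesis using True kk(1) by blast
  next
    case False
    then have es: "early_step P ?s t i a (ss!Suc k)" using lt by blast
    define Q where "Q = (\<lambda>i'. i' < i \<and> fetched ?s t i' \<and> is_store (cmd_at ?s t i') \<and> addr ?s t i' \<in> {Some a, None})"
    define g where "g = (GREATEST i'. Q i')"
    have ex: "\<exists>i'. Q i'" using es unfolding early_step_def Q_def by blast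
    have Qg: "Q g" unfolding g_def using ex by (metis GreatestI_nat Q_def less_imp_le)
    have gprops: "addr ?s t g = Some a" "g \<notin> Cs ?s t"
      using es unfolding early_step_def Let_def g_def Q_def by auto
    have gf: "g < i" "fetched ?s t g" "is_store (cmd_at ?s t g)" using Qg Q_def by auto
    have exk: "ext ?s ?sf" using run_ext[OF R, of k ?N] kk(1) by simp
    have "fetched ?sf t g" using ext_fetched[OF exk gf(2)] .
    then have "g \<in> Cs ?sf t" using run_final[OF R] by (simp add: final_def)
    from first_cross[where Q="\<lambda>n. g \<in> Cs (ss!n) t", OF gprops(2) this] kk(1)
    obtain m where m: "k \<le> m" "m < ?N" "g \<notin> Cs (ss!m) t" "g \<in> Cs (ss!Suc m) t" by auto
    have exm: "ext ?s (ss!m)" using run_ext[OF R, of k m] m by simp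
    have cm: "cmd_at (ss!m) t g = cmd_at ?s t g" using ext_cmd_at[OF exm gf(2)] .
    have am: "addr (ss!m) t g = Some a" using addr_mono[OF exm gf(2) gprops(1)] .
    from step_Cs_new[OF run_step[OF R m(2)] m(3,4)] cm gf(3) am
    obtain kk where evm: "ess!m = [ECommitSt t g kk a, EProp t t g a]" by auto
    have "m \<noteq> k" using evm evk by auto
    then have "k < m" using m(1) by simp
    then have "ECommitSt t g kk a \<in> set \<sigma>3" using in_concat_drop[of k m ess] m(2) evm kk(4) by auto
    moreover have "g \<in> {1..i - 1}" using gf(1,2) by (auto simp: fetched_def)
    ultimately show ?thesis using c3 by blast
  qed
qed

theorem lemma5:
  fixes P :: "('q, 'r::finite, 'd::{zero, finite}) program"
    and ss :: "('q, 'r, 'd) pstate list"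
    and ess :: "('q, 'r, 'd) event list list"
    and \<sigma> :: "('q, 'r, 'd) event list"
  assumes "wf_prog P"
    and "power_run P ss ess"
    and "\<sigma> = concat ess"
  shows "(\<exists>k < length ess. \<exists>a. lfm_step P (ss ! k) t i a (ss ! Suc k)
                               \<and> Ls (ss ! Suc k) t i = Some (St t' i'))
     \<longleftrightarrow> (\<exists>\<sigma>1 \<sigma>2 \<sigma>3 a.
           \<sigma> = \<sigma>1 @ [EProp t t' i' a] @ \<sigma>2 @ [ELoad t i a] @ \<sigma>3
         \<and> (\<forall>e\<in>set \<sigma>2. \<not> (\<exists>x y. e = EProp t x y a))
         \<and> (\<forall>e\<in>set \<sigma>3. \<not> (\<exists>j k. e = ECommitSt t j k a \<and> j \<in> {1..i - 1})))"
  using dir1[OF assms(2)] dir2[OF assms(2)] assms(3) by metis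

end
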